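(* Let $\mathbf{k}$ be a field and let $p\in\mathbf{k}[y]$ satisfy: for all $\alpha,\beta,\gamma\in\mathbf{k}$, if $\deg[p(y)-\alpha p(\beta y+\gamma)]\le 1$ then $\alpha=\beta=1$ and $\gamma=0$. Let $\sigma=(y,x)$, $t=(-x+p(y),y)$ and $f=(\sigma\circ t)^2\circ\sigma\circ(t\circ\sigma)^2$ in $\mathrm{Aut}(\mathbb{A}^2_{\mathbf{k}})$. Then the subgroup $\langle B,f\rangle$ generated by $B$ and $f$ is strictly contained in $\mathrm{Aut}(\mathbb{A}^2_{\mathbf{k}})$.
   Context: $\mathrm{Aut}(\mathbb{A}^2_{\mathbf{k}})$ is the group of polynomial automorphisms $(f_1,f_2)$ of the affine plane over $\mathbf{k}$, with composition $g\circ f=(g_1(f_1,f_2),g_2(f_1,f_2))$. $B=\{(ax+q(y),\,b'y+c'): a,b'\in\mathbf{k}^*,\ c'\in\mathbf{k},\ q\in\mathbf{k}[y]\}$ is the Jonquières subgroup. *)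

theory Defs
  imports "HOL-Computational_Algebra.Polynomial"
begin

text \<open>Bivariate polynomials k[x,y] are represented as (k[y])[x], i.e. by the type
  'a poly poly: the outer variable is x, the coefficients are polynomials in y.\<close>

type_synonym 'a bipoly = "'a poly poly"

definition polX :: "'a::comm_ring_1 bipoly" where
  "polX = [:0, 1:]"

definition polY :: "'a::comm_ring_1 bipoly" where
  "polY = [:[:0, 1:]:]"

definition eval2 :: "'a::comm_ring_1 bipoly \<Rightarrow> 'a bipoly \<Rightarrow> 'a bipoly \<Rightarrow> 'a bipoly" where
  "eval2 g f1 f2 = poly (map_poly (\<lambda>c. poly (map_poly (\<lambda>a. [:[:a:]:]) c) f2) g) f1"

type_synonym 'a endo2 = "'a bipoly \<times> 'a bipoly"

definition comp2 :: "'a::comm_ring_1 endo2 \<Rightarrow> 'a endo2 \<Rightarrow> 'a endo2" where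
  "comp2 g f = (eval2 (fst g) (fst f) (snd f), eval2 (snd g) (fst f) (snd f))"

definition id2 :: "'a::comm_ring_1 endo2" where
  "id2 = (polX, polY)"

definition Aut2 :: "'a::comm_ring_1 endo2 set" where
  "Aut2 = {f. \<exists>g. comp2 g f = id2 \<and> comp2 f g = id2}"

text \<open>Jonquieres subgroup: (a x + q(y), b' y + c').\<close>
definition Jonq :: "'a::field endo2 set" where
  "Jonq = {(pCons q (pCons [:a:] 0), [:[:c', b':]:]) | a b' c' q. a \<noteq> 0 \<and> b' \<noteq> 0}"

inductive_set gen_subgroup :: "'a::comm_ring_1 endo2 set \<Rightarrow> 'a endo2 set" for S where
  gen_id: "id2 \<in> gen_subgroup S"
| gen_mult: "a \<in> gen_subgroup S \<Longrightarrow> s \<in> S \<Longrightarrow> comp2 s a \<in> gen_subgroup S"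
| gen_inv: "a \<in> gen_subgroup S \<Longrightarrow> s \<in> S \<Longrightarrow> comp2 s' s = id2 \<Longrightarrow> comp2 s s' = id2
            \<Longrightarrow> comp2 s' a \<in> gen_subgroup S"

end

theory Submission
  imports Defs
begin


definition rh :: "('a::comm_ring_1 \<Rightarrow> 'b::comm_ring_1) \<Rightarrow> bool" where
  "rh f \<longleftrightarrow> f 0 = 0 \<and> f 1 = 1 \<and> (\<forall>x y. f (x+y) = f x + f y) \<and> (\<forall>x y. f (x*y) = f x * f y)"

lemma rh_minus: "rh f \<Longrightarrow> f (- x) = - f x"
proof -
  assume "rh f"
  then have "f (-x + x) = f (-x) + f x" unfolding rh_def by blast
  then have "f (-x) + f x = f (-x + x)" by simp
  also have "\<dots> = 0" using \<open>rh f\<close> unfolding rh_def by simp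
  finally have "f (-x) + f x = 0" .
  then show ?thesis by (simp add: eq_neg_iff_add_eq_0)
qed

lemma rh_diff: "rh f \<Longrightarrow> f (x - y) = f x - f y"
proof -
  assume f: "rh f"
  have "f (x + - y) = f x + f (- y)" using f unfolding rh_def by blast
  then show ?thesis using rh_minus[OF f, of y] by simp
qed

lemma mp_add: "rh f \<Longrightarrow> map_poly f (p+q) = map_poly f p + map_poly f q"
  by (intro poly_eqI) (simp add: coeff_map_poly rh_def)

lemma mp_uminus: "rh f \<Longrightarrow> map_poly f (- p) = - map_poly f p"
  by (intro poly_eqI) (simp add: coeff_map_poly rh_minus rh_def)

lemma mp_diff: "rh f \<Longrightarrow> map_poly f (p - q) = map_poly f p - map_poly f q"
  by (intro poly_eqI) (simp add: coeff_map_poly rh_diff rh_def)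

lemma mp_smult: "rh f \<Longrightarrow> map_poly f (smult a p) = smult (f a) (map_poly f p)"
  by (rule map_poly_smult) (auto simp: rh_def)

lemma mp_pCons: "rh f \<Longrightarrow> map_poly f (pCons a p) = pCons (f a) (map_poly f p)"
  by (rule map_poly_pCons) (auto simp: rh_def)

lemma mp_mult: "rh f \<Longrightarrow> map_poly f (p*q) = map_poly f p * map_poly f q"
proof (induction p)
  case 0 then show ?case by simp
next
  case (pCons a p)
  then show ?case
    by (simp add: mp_add mp_smult mp_pCons rh_def)
qed

lemma mp_const: "rh f \<Longrightarrow> map_poly f [:a:] = [:f a:]"
  by (simp add: mp_pCons rh_def)

lemma mp_pcompose: "rh f \<Longrightarrow> map_poly f (pcompose p q) = pcompose (map_poly f p) (map_poly f q)"
proof (induction p)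
  case 0 then show ?case by simp
next
  case (pCons a p)
  then show ?case
    by (simp add: pcompose_pCons mp_add mp_mult mp_const mp_pCons)
qed

lemma rh_mp: "rh f \<Longrightarrow> rh (map_poly f)"
  unfolding rh_def[of "map_poly f"] by (simp add: mp_add mp_mult mp_const rh_def[of f] one_pCons)

lemma rh_const: "rh (\<lambda>x. [:x:])"
  unfolding rh_def by (simp add: one_pCons)

lemma rh_comp: "rh f \<Longrightarrow> rh g \<Longrightarrow> rh (\<lambda>x. g (f x))"
  unfolding rh_def by simp

lemma rh_pcomp: "rh f \<Longrightarrow> rh (\<lambda>c. pcompose (map_poly f c) v)"
  unfolding rh_def[of "\<lambda>c. pcompose (map_poly f c) v"]
  by (simp add: mp_add mp_mult pcompose_add pcompose_mult mp_const pcompose_1 rh_def[of f] flip: one_pCons)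

definition gsub :: "('a::comm_ring_1 \<Rightarrow> 'b::comm_ring_1) \<Rightarrow> 'a poly poly \<Rightarrow> 'b poly \<Rightarrow> 'b poly \<Rightarrow> 'b poly" where
  "gsub k P u v = poly (map_poly (\<lambda>c. pcompose (map_poly k c) v) P) u"

lemma gsub_pCons: "rh k \<Longrightarrow> gsub k (pCons c P) u v = pcompose (map_poly k c) v + u * gsub k P u v"
  unfolding gsub_def by (simp add: mp_pCons rh_pcomp)

lemma gsub_0[simp]: "gsub k 0 u v = 0"
  unfolding gsub_def by simp

lemma gsub_add: "rh k \<Longrightarrow> gsub k (P + Q) u v = gsub k P u v + gsub k Q u v"
  unfolding gsub_def by (simp add: mp_add rh_pcomp)

lemma gsub_mult: "rh k \<Longrightarrow> gsub k (P * Q) u v = gsub k P u v * gsub k Q u v"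
  unfolding gsub_def by (simp add: mp_mult rh_pcomp)

lemma gsub_uminus: "rh k \<Longrightarrow> gsub k (- P) u v = - gsub k P u v"
  unfolding gsub_def by (simp add: mp_uminus rh_pcomp)

lemma gsub_diff: "rh k \<Longrightarrow> gsub k (P - Q) u v = gsub k P u v - gsub k Q u v"
  unfolding gsub_def by (simp add: mp_diff rh_pcomp)

lemma gsub_const: "rh k \<Longrightarrow> gsub k [:c:] u v = pcompose (map_poly k c) v"
  by (simp add: gsub_pCons)

lemma gsub_cc: "rh k \<Longrightarrow> gsub k [:[:a:]:] u v = [:k a:]"
  by (simp add: gsub_const mp_const)

lemma gsub_smult: "rh k \<Longrightarrow> gsub k (smult [:a:] P) u v = smult (k a) (gsub k P u v)"
proof -
  assume k: "rh k"
  have "gsub k ([:[:a:]:] * P) u v = [:k a:] * gsub k P u v" using k by (simp only: gsub_mult gsub_cc)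
  then show ?thesis by simp
qed

lemma gsub_X: "rh k \<Longrightarrow> gsub k polX u v = u"
  by (simp add: polX_def gsub_pCons mp_const rh_def pcompose_1)

lemma gsub_Y: "rh k \<Longrightarrow> gsub k polY u v = v"
  by (simp add: polY_def gsub_const mp_pCons mp_const rh_def pcompose_pCons)

abbreviation L :: "'a::comm_ring_1 poly \<Rightarrow> 'a poly poly" where
  "L q \<equiv> map_poly (\<lambda>a. [:a:]) q"

lemma gsub_pcomp: "rh k \<Longrightarrow> gsub k (pcompose (L c) w) u v = pcompose (map_poly k c) (gsub k w u v)"
proof (induction c)
  case 0 then show ?case by simp
next
  case (pCons a c)
  then show ?case
    by (simp add: mp_pCons rh_const pcompose_pCons gsub_add gsub_mult gsub_cc)
qed

lemma eval2_gsub: "eval2 g f1 f2 = gsub (\<lambda>a. [:a:]) g f1 f2"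
  unfolding eval2_def gsub_def pcompose_altdef
  by (simp add: map_poly_map_poly o_def)

lemma gsub_eval2: "rh k \<Longrightarrow> gsub k (eval2 g f1 f2) u v = gsub k g (gsub k f1 u v) (gsub k f2 u v)"
proof (induction g)
  case 0 then show ?case by (simp add: eval2_gsub)
next
  case (pCons c g)
  then show ?case
    by (simp add: eval2_gsub gsub_pCons rh_const gsub_add gsub_mult gsub_pcomp)
qed

lemma eval2_assoc: "eval2 (eval2 g f1 f2) h1 h2 = eval2 g (eval2 f1 h1 h2) (eval2 f2 h1 h2)"
  using gsub_eval2[OF rh_const] by (simp add: eval2_gsub)

lemma comp2_assoc: "comp2 (comp2 h g) f = comp2 h (comp2 g f)"
  unfolding comp2_def by (simp add: eval2_assoc)

lemma pcomp_L_Y: "pcompose (L q) polY = [:q:]"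
  unfolding polY_def by (simp add: pcompose_pCons_0 flip: pcompose_altdef)

lemma eval2_XY: "eval2 g polX polY = g"
proof (induction g)
  case 0 then show ?case by (simp add: eval2_gsub)
next
  case (pCons c g)
  then show ?case
    by (simp add: eval2_gsub gsub_pCons rh_const pcomp_L_Y polX_def)
qed

lemma comp2_id_left[simp]: "comp2 id2 f = f"
  unfolding comp2_def id2_def by (simp add: eval2_gsub gsub_X gsub_Y rh_const)

lemma comp2_id_right[simp]: "comp2 f id2 = f"
  unfolding comp2_def id2_def by (simp add: eval2_XY)



definition Jp :: "'a::field \<Rightarrow> 'a poly \<Rightarrow> 'a \<Rightarrow> 'a \<Rightarrow> 'a endo2" where
  "Jp a q b c = (pCons q (pCons [:a:] 0), [:[:c, b:]:])"

definition sg :: "'a::comm_ring_1 endo2" where "sg = (polY, polX)"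

definition js :: "'a::field \<Rightarrow> 'a poly \<Rightarrow> 'a \<Rightarrow> 'a \<Rightarrow> 'a endo2 \<Rightarrow> 'a endo2" where
  "js a q b c w = (smult [:a:] (snd w) + pcompose (L q) (fst w), [:[:c:]:] + smult [:b:] (fst w))"

lemma comp2_Jp: "comp2 (Jp a q b c) w =
   (smult [:a:] (fst w) + pcompose (L q) (snd w), [:[:c:]:] + smult [:b:] (snd w))"
  unfolding comp2_def Jp_def
  by (simp add: eval2_gsub gsub_pCons rh_const gsub_const mp_pCons mp_const pcompose_pCons algebra_simps)

lemma comp2_sg: "comp2 sg w = (snd w, fst w)"
  unfolding comp2_def sg_def by (simp add: eval2_gsub gsub_X gsub_Y rh_const)

lemma Jp_sg: "comp2 (Jp a q b c) (comp2 sg w) = js a q b c w"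
  by (simp add: comp2_Jp comp2_sg js_def)

lemma sg_sg: "comp2 sg sg = id2"
  unfolding comp2_sg by (simp add: sg_def id2_def)

lemma pcomp_L_const: "pcompose (L q) [:r:] = [:pcompose q r:]"
  by (simp add: pcompose_pCons_0 flip: pcompose_altdef)

lemma Jp_comp: "comp2 (Jp a q b c) (Jp a' q' b' c') =
   Jp (a*a') (smult a q' + pcompose q [:c', b':]) (b*b') (c + b*c')"
proof -
  have "[:[:c', b':]:] = [:[:c', b':]:]" ..
  show ?thesis
    unfolding comp2_Jp by (simp add: Jp_def pcomp_L_const)
qed

lemma Jp_id: "Jp 1 0 1 0 = (id2 :: 'a::field endo2)"
  by (simp add: Jp_def id2_def polX_def polY_def)

definition Jinv :: "'a::field \<Rightarrow> 'a poly \<Rightarrow> 'a \<Rightarrow> 'a \<Rightarrow> 'a endo2" where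
  "Jinv a q b c = Jp (1/a) (- smult (1/a) (pcompose q [:-c/b, 1/b:])) (1/b) (-c/b)"

lemma lin_comp: "(b::'a::field) \<noteq> 0 \<Longrightarrow> pcompose [:-(c/b), 1/b:] [:c, b:] = [:0, 1:]"
  by (simp add: pcompose_pCons field_simps)

lemma lin_comp2: "(b::'a::field) \<noteq> 0 \<Longrightarrow> pcompose [:c, b:] [:-c/b, 1/b:] = [:0, 1:]"
  by (simp add: pcompose_pCons field_simps)

lemma Jinv_left: "a \<noteq> 0 \<Longrightarrow> b \<noteq> 0 \<Longrightarrow> comp2 (Jinv a q b c) (Jp a q b c) = id2"
  unfolding Jinv_def Jp_comp
  by (simp add: pcompose_uminus pcompose_smult lin_comp flip: pcompose_assoc Jp_id)

lemma Jinv_right: "a \<noteq> 0 \<Longrightarrow> b \<noteq> 0 \<Longrightarrow> comp2 (Jp a q b c) (Jinv a q b c) = id2"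
  unfolding Jinv_def Jp_comp
  by (simp add: pcompose_uminus pcompose_smult pcompose_assoc lin_comp2 flip: Jp_id)

lemma Jonq_iff: "x \<in> Jonq \<longleftrightarrow> (\<exists>a q b c. a \<noteq> 0 \<and> b \<noteq> 0 \<and> x = Jp a q b c)"
  unfolding Jonq_def Jp_def by blast

abbreviation kk :: "'a::comm_ring_1 \<Rightarrow> 'a poly poly" where "kk \<equiv> (\<lambda>a. [:[:a:]:])"

lemma rh_kk: "rh kk"
  using rh_comp[OF rh_const rh_const] by simp

definition H :: "'a::comm_ring_1 bipoly \<Rightarrow> 'a bipoly poly" where
  "H P = gsub kk P [:0, polX:] [:0, polY:]"

definition D :: "'a::comm_ring_1 bipoly \<Rightarrow> nat" where "D P = degree (H P)"

lemma H_add: "H (P + Q) = H P + H Q" unfolding H_def by (simp add: gsub_add rh_kk)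
lemma H_smult: "H (smult [:a:] P) = smult [:[:a:]:] (H P)" unfolding H_def by (simp add: gsub_smult rh_kk)
lemma H_cc: "H [:[:a:]:] = [:[:[:a:]:]:]" unfolding H_def by (simp add: gsub_cc rh_kk)
lemma H_pcomp: "H (pcompose (L q) w) = pcompose (map_poly kk q) (H w)"
  unfolding H_def by (simp add: gsub_pcomp rh_kk)
lemma H_X: "H polX = [:0, polX:]" unfolding H_def by (simp add: gsub_X rh_kk)

lemma degree_pcomp_kk: "degree (pcompose (map_poly kk q) (W :: 'a::field bipoly poly)) = degree q * degree W"
proof (cases "q = 0")
  case True then show ?thesis by simp
next
  case False
  have "degree (map_poly kk q) = degree q"
    by (rule map_poly_degree_eq) (use False in simp)
  then show ?thesis by (simp add: degree_pcompose)
qed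

lemma D_X: "D (polX :: 'a::field bipoly) = 1"
  unfolding D_def H_X by (simp add: polX_def)

definition S :: "'a::field endo2 \<Rightarrow> bool" where
  "S w \<longleftrightarrow> 1 \<le> D (snd w) \<and> D (snd w) < D (fst w)"
definition P' :: "'a::field endo2 \<Rightarrow> bool" where
  "P' w \<longleftrightarrow> 1 \<le> D (snd w) \<and> D (snd w) \<le> D (fst w)"

lemma S_P': "S w \<Longrightarrow> P' w" unfolding S_def P'_def by simp

lemma D_js2: assumes "b \<noteq> 0" "1 \<le> D (fst w)" shows "D (snd (js a q b c w)) = D (fst w)"
proof -
  have "H (snd (js a q b c w)) = [:[:[:c:]:]:] + smult [:[:b:]:] (H (fst w))"
    by (simp add: js_def H_add H_smult H_cc)
  also have "degree \<dots> = D (fst w)"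
    by (subst degree_add_eq_right) (use assms in \<open>auto simp: D_def\<close>)
  finally show ?thesis by (simp add: D_def)
qed

lemma D_js1: assumes "D (snd w) < degree q * D (fst w)"
  shows "D (fst (js a q b c w)) = degree q * D (fst w)"
proof -
  have "H (fst (js a q b c w)) = smult [:[:a:]:] (H (snd w)) + pcompose (map_poly kk q) (H (fst w))"
    by (simp add: js_def H_add H_smult H_pcomp)
  also have "degree \<dots> = degree q * D (fst w)"
  proof (subst degree_add_eq_right)
    show "degree (smult [:[:a:]:] (H (snd w))) < degree (pcompose (map_poly kk q) (H (fst w)))"
      using assms degree_smult_le[of "[:[:a:]:]" "H (snd w)"]
      by (simp add: degree_pcomp_kk D_def)
  qed (simp add: degree_pcomp_kk D_def)
  finally show ?thesis by (simp add: D_def)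
qed

lemma L1: assumes "b \<noteq> 0" "2 \<le> degree q" "P' w" shows "S (js a q b c w)"
proof -
  have w: "1 \<le> D (snd w)" "D (snd w) \<le> D (fst w)" using assms(3) by (auto simp: P'_def)
  have "D (fst w) < degree q * D (fst w)" using w assms(2)
    by (metis One_nat_def Suc_1 Suc_le_eq less_le_trans mult_less_mono1 nat_mult_1 order_le_less_trans zero_less_one)
  then have "D (fst (js a q b c w)) = degree q * D (fst w)"
    using w by (intro D_js1) (meson le_less_trans)
  moreover have "D (snd (js a q b c w)) = D (fst w)" using w assms(1) by (intro D_js2) auto
  ultimately show ?thesis using \<open>D (fst w) < _\<close> w unfolding S_def by simp
qed

lemma L4: assumes "b \<noteq> 0" "1 \<le> degree q" "S w" shows "P' (js a q b c w)"
proof -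
  have w: "1 \<le> D (snd w)" "D (snd w) < D (fst w)" using assms(3) by (auto simp: S_def)
  have le: "D (fst w) \<le> degree q * D (fst w)" using assms(2) by simp
  then have "D (fst (js a q b c w)) = degree q * D (fst w)"
    using w by (intro D_js1) (meson less_le_trans)
  moreover have "D (snd (js a q b c w)) = D (fst w)" using w assms(1) by (intro D_js2) auto
  ultimately show ?thesis using le w unfolding P'_def by simp
qed



definition tt :: "'a::field poly \<Rightarrow> 'a endo2" where "tt p = Jp (-1) p 1 0"

lemma H_pCons: "H (pCons c P) = pcompose (map_poly kk c) [:0, polY:] + [:0, polX:] * H P"
  unfolding H_def by (simp add: gsub_pCons rh_kk)

lemma H_const: "H [:c:] = pcompose (map_poly kk c) [:0, polY:]"
  unfolding H_def by (simp add: gsub_const rh_kk)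

lemma smult_m1: "smult [:- 1:] (x :: 'a::comm_ring_1 poly poly) = - x"
proof -
  have "[:-1:] = - (1::'a::comm_ring_1 poly)" by (simp add: one_pCons)
  then show ?thesis by simp
qed

lemma smult_p1: "smult [:1:] (x :: 'a::comm_ring_1 poly poly) = x"
proof -
  have "smult [:1:] x = smult 1 x" by (simp only: one_pCons)
  then show ?thesis by simp
qed

lemma smult_mb: "smult [:- b:] (x :: 'a::comm_ring_1 poly poly) = - smult [:b:] x"
proof -
  have "[:-b:] = - [:b:]" by simp
  then show ?thesis by (simp only: smult_minus_left)
qed

lemma kk_minus: "kk (- c) = - kk (c::'a::comm_ring_1)"
  by simp

lemma coeff_mp_kk[simp]: "coeff (map_poly kk q) n = kk (coeff q n)"
  by (simp add: coeff_map_poly)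

lemma L3: assumes "a \<noteq> 0" "b \<noteq> 0" shows "P' (Jp (a::'a::field) q b c)"
proof -
  have d2: "D (snd (Jp a q b c)) = 1"
    unfolding Jp_def D_def using assms by (simp add: H_const degree_pcomp_kk polY_def)
  have "coeff (H (fst (Jp a q b c))) 1 = [:[:0, coeff q 1:], [:a:]:]"
    unfolding Jp_def by (simp add: H_pCons coeff_pcompose_linear polX_def polY_def mp_const rh_kk)
  then have "coeff (H (fst (Jp a q b c))) 1 \<noteq> 0" using assms by simp
  then have "1 \<le> D (fst (Jp a q b c))" unfolding D_def by (rule le_degree)
  then show ?thesis using d2 unfolding P'_def by simp
qed

lemma RW: "js (-1) p 1 0 (js a [:h:] b c (js (-1) p 1 0 u)) =
   js b (pcompose p [:h, a:] - smult b p - [:c:]) a h (u :: 'a::field endo2)"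
proof -
  obtain u1 u2 where u: "u = (u1, u2)" by force
  define P where "P = (\<lambda>z. pcompose (L p) z)"
  have Lc: "\<And>c. L [:c:] = kk c" by (simp add: mp_const rh_const)
  have Lha: "L [:h, a:] = [:[:h:], [:a:]:]" by (simp add: mp_pCons mp_const rh_const)
  have "js (-1) p 1 0 u = (P u1 - u2, u1)"
    unfolding js_def u P_def by (simp add: smult_m1 smult_p1 Lc)
  then have "js a [:h:] b c (js (-1) p 1 0 u) = (smult [:a:] u1 + kk h, kk c + smult [:b:] (P u1 - u2))"
    unfolding js_def by (simp add: Lc)
  then have "js (-1) p 1 0 (js a [:h:] b c (js (-1) p 1 0 u)) =
       (P (smult [:a:] u1 + kk h) - (kk c + smult [:b:] (P u1 - u2)), smult [:a:] u1 + kk h)"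
    unfolding js_def P_def by (simp add: smult_m1 smult_p1 Lc)
  moreover have "js b (pcompose p [:h, a:] - smult b p - [:c:]) a h u =
      (smult [:b:] u2 + (P (smult [:a:] u1 + kk h) - smult [:b:] (P u1) - kk c), kk h + smult [:a:] u1)"
    unfolding js_def u P_def
    by (simp add: mp_diff mp_smult mp_pcompose rh_const pcompose_diff pcompose_smult Lc Lha pcompose_pCons
        add.commute flip: pcompose_assoc)
  ultimately show ?thesis by (simp add: algebra_simps smult_diff_right)
qed



definition ff :: "'a::field poly \<Rightarrow> 'a endo2" where
  "ff p = comp2 (comp2 (comp2 sg (tt p)) (comp2 sg (tt p)))
                 (comp2 sg (comp2 (comp2 (tt p) sg) (comp2 (tt p) sg)))"

abbreviation T :: "'a::field poly \<Rightarrow> 'a endo2 \<Rightarrow> 'a endo2" where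
  "T p w \<equiv> js (-1) p 1 0 w"

lemma tt_sg: "comp2 (tt p) (comp2 sg w) = T p w"
  unfolding tt_def by (rule Jp_sg)

lemma ff_rn: "ff p = comp2 sg (comp2 (tt p) (comp2 sg (comp2 (tt p) (comp2 sg (comp2 (tt p) (comp2 sg (comp2 (tt p) sg)))))))"
  unfolding ff_def by (simp only: comp2_assoc)

lemma f_apply: "comp2 (ff p) x = comp2 sg (T p (T p (T p (T p x))))"
  unfolding ff_rn by (simp only: comp2_assoc) (simp only: tt_sg)

lemma sg_sg2: "comp2 sg (comp2 sg x) = x"
  by (simp flip: comp2_assoc add: sg_sg)

lemma tt_tt: "comp2 (tt p) (tt p) = id2"
  unfolding tt_def Jp_comp by (simp flip: Jp_id)

lemma tt_tt2: "comp2 (tt p) (comp2 (tt p) x) = x"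
  by (simp flip: comp2_assoc add: tt_tt)

lemma ff_ff: "comp2 (ff p) (ff p) = id2"
  unfolding ff_rn by (simp only: comp2_assoc sg_sg2 tt_tt2 sg_sg tt_tt)

lemma Aut2_comp: "a \<in> Aut2 \<Longrightarrow> b \<in> Aut2 \<Longrightarrow> comp2 a b \<in> Aut2"
proof -
  assume "a \<in> Aut2" "b \<in> Aut2"
  then obtain a' b' where a: "comp2 a' a = id2" "comp2 a a' = id2" and b: "comp2 b' b = id2" "comp2 b b' = id2"
    unfolding Aut2_def by blast
  have "comp2 (comp2 b' a') (comp2 a b) = id2"
    by (simp add: comp2_assoc flip: comp2_assoc[of a' a b] add: a b)
  moreover have "comp2 (comp2 a b) (comp2 b' a') = id2"
    by (simp add: comp2_assoc flip: comp2_assoc[of b b' a'] add: a b)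
  ultimately show ?thesis unfolding Aut2_def by blast
qed

lemma Jonq_Aut2: "x \<in> Jonq \<Longrightarrow> x \<in> Aut2"
  unfolding Jonq_iff Aut2_def using Jinv_left Jinv_right by blast

lemma ff_Aut2: "ff p \<in> Aut2"
  unfolding Aut2_def using ff_ff by blast

lemma sg_Aut2: "sg \<in> Aut2"
  unfolding Aut2_def using sg_sg by blast

lemma id2_Aut2: "id2 \<in> Aut2"
  unfolding Aut2_def using comp2_id_left[of id2] by blast

lemma gen_Aut2: "g \<in> gen_subgroup (Jonq \<union> {ff p}) \<Longrightarrow> g \<in> Aut2"
proof (induction rule: gen_subgroup.induct)
  case gen_id then show ?case by (rule id2_Aut2)
next
  case (gen_mult a s)
  then have "s \<in> Aut2" using Jonq_Aut2 ff_Aut2 by blast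
  then show ?case using gen_mult Aut2_comp by blast
next
  case (gen_inv a s s')
  then have "s' \<in> Aut2" unfolding Aut2_def by blast
  then show ?case using gen_inv Aut2_comp by blast
qed

lemma Jp_in_Jonq: "a \<noteq> 0 \<Longrightarrow> b \<noteq> 0 \<Longrightarrow> Jp a q b c \<in> Jonq"
  unfolding Jonq_iff by blast

lemma Jonq_comp: assumes "x \<in> Jonq" "y \<in> Jonq" shows "comp2 x y \<in> Jonq"
proof -
  obtain a q b c where x: "a \<noteq> 0" "b \<noteq> 0" "x = Jp a q b c" using assms(1) unfolding Jonq_iff by blast
  obtain a' q' b' c' where y: "a' \<noteq> 0" "b' \<noteq> 0" "y = Jp a' q' b' c'" using assms(2) unfolding Jonq_iff by blast
  show ?thesis unfolding x y Jp_comp using x y by (intro Jp_in_Jonq) auto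
qed

lemma id2_Jonq: "id2 \<in> Jonq"
  unfolding Jonq_iff by (rule exI[of _ 1], rule exI[of _ 0], rule exI[of _ 1], rule exI[of _ 0]) (simp add: Jp_id)

lemma inv_unique: "comp2 s' s = id2 \<Longrightarrow> comp2 s s'' = id2 \<Longrightarrow> s' = s''"
proof -
  assume a: "comp2 s' s = id2" and b: "comp2 s s'' = id2"
  have "s' = comp2 s' (comp2 s s'')" using b by simp
  also have "\<dots> = comp2 (comp2 s' s) s''" by (simp only: comp2_assoc)
  also have "\<dots> = s''" using a by simp
  finally show ?thesis .
qed

inductive_set RR :: "'a::field endo2 \<Rightarrow> 'a endo2 set" for f where
  RR_base: "b \<in> Jonq \<Longrightarrow> comp2 f b \<in> RR f"
| RR_step: "b \<in> Jonq \<Longrightarrow> b \<noteq> id2 \<Longrightarrow> r \<in> RR f \<Longrightarrow> comp2 f (comp2 b r) \<in> RR f"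

definition W :: "'a::field poly \<Rightarrow> 'a endo2 set" where
  "W p = Jonq \<union> {comp2 b r | b r. b \<in> Jonq \<and> r \<in> RR (ff p)}"

lemma W_closed: assumes "s \<in> Jonq \<union> {ff p}" "a \<in> W p" shows "comp2 s a \<in> W p"
proof (cases "s \<in> Jonq")
  case True
  show ?thesis
  proof (cases "a \<in> Jonq")
    case True
    then show ?thesis using \<open>s \<in> Jonq\<close> Jonq_comp unfolding W_def by blast
  next
    case False
    then obtain b r where a: "a = comp2 b r" "b \<in> Jonq" "r \<in> RR (ff p)"
      using assms(2) unfolding W_def by blast
    then have "comp2 s a = comp2 (comp2 s b) r" by (simp add: comp2_assoc)
    moreover have "comp2 s b \<in> Jonq" using a True Jonq_comp by blast
    ultimately show ?thesis unfolding W_def using a by blast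
  qed
next
  case False
  then have s: "s = ff p" using assms(1) by blast
  show ?thesis
  proof (cases "a \<in> Jonq")
    case True
    then have "comp2 s a \<in> RR (ff p)" using s RR_base by blast
    then have "comp2 id2 (comp2 s a) \<in> W p" unfolding W_def using id2_Jonq by blast
    then show ?thesis by simp
  next
    case False
    then obtain b r where a: "a = comp2 b r" "b \<in> Jonq" "r \<in> RR (ff p)"
      using assms(2) unfolding W_def by blast
    show ?thesis
    proof (cases "b = id2")
      case False
      then have "comp2 s a \<in> RR (ff p)" using s a RR_step by blast
      then have "comp2 id2 (comp2 s a) \<in> W p" unfolding W_def using id2_Jonq by blast
      then show ?thesis by simp
    next
      case True
      then have sa: "comp2 s a = comp2 (ff p) r" using a s by simp
      from a(3) have "comp2 (ff p) r \<in> W p"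
      proof cases
        case (RR_base b1)
        then have "comp2 (ff p) r = b1" by (simp flip: comp2_assoc add: ff_ff)
        then show ?thesis unfolding W_def using RR_base by simp
      next
        case (RR_step b1 r1)
        then have "comp2 (ff p) r = comp2 b1 r1" by (simp flip: comp2_assoc add: ff_ff)
        then show ?thesis unfolding W_def using RR_step by blast
      qed
      then show ?thesis using sa by simp
    qed
  qed
qed

lemma gen_W: "g \<in> gen_subgroup (Jonq \<union> {ff p}) \<Longrightarrow> g \<in> W p"
proof (induction rule: gen_subgroup.induct)
  case gen_id then show ?case unfolding W_def using id2_Jonq by blast
next
  case (gen_mult a s)
  then show ?case using W_closed by blast
next
  case (gen_inv a s s')
  have "s' \<in> Jonq \<union> {ff p}"
  proof (cases "s \<in> Jonq")
    case True
    then obtain a1 q b c where s: "a1 \<noteq> 0" "b \<noteq> 0" "s = Jp a1 q b c" unfolding Jonq_iff by blast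
    have "s' = Jinv a1 q b c" using inv_unique[OF gen_inv(3)] Jinv_right s by blast
    moreover have "Jinv a1 q b c \<in> Jonq" unfolding Jinv_def using s by (intro Jp_in_Jonq) auto
    ultimately show ?thesis by blast
  next
    case False
    then have "s = ff p" using gen_inv by blast
    then have "s' = ff p" using inv_unique[OF gen_inv(3)] ff_ff by blast
    then show ?thesis by blast
  qed
  then show ?case using W_closed gen_inv by blast
qed



definition hpP :: "'a::field poly \<Rightarrow> bool" where
  "hpP p \<longleftrightarrow> (\<forall>\<alpha> \<beta> \<gamma>. degree (p - smult \<alpha> (p \<circ>\<^sub>p [:\<gamma>, \<beta>:])) \<le> 1
                 \<longrightarrow> \<alpha> = 1 \<and> \<beta> = 1 \<and> \<gamma> = 0)"

lemma hp2: assumes "hpP p" shows "2 \<le> degree p"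
proof (rule ccontr)
  assume "\<not> 2 \<le> degree p"
  then have "degree (p - smult 0 (p \<circ>\<^sub>p [:0, 0:])) \<le> 1" by simp
  then have "(0::'a) = 1" using assms unfolding hpP_def by blast
  then show False by simp
qed

lemma hp_r: assumes "hpP p" "b \<noteq> 0" "degree (p \<circ>\<^sub>p [:h, a:] - smult b p - [:c:]) = 0"
  shows "a = 1 \<and> b = 1 \<and> h = 0"
proof -
  define r where "r = p \<circ>\<^sub>p [:h, a:] - smult b p - [:c:]"
  have eq: "p - smult (1/b) (p \<circ>\<^sub>p [:h, a:]) = smult (-1/b) (r + [:c:])"
    unfolding r_def using assms(2) by (simp add: smult_diff_right algebra_simps)
  have "degree (r + [:c:]) = 0" using assms(3) unfolding r_def
    by (metis (no_types, lifting) degree_add_le degree_pCons_0 le_zero_eq)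
  then have "degree (p - smult (1/b) (p \<circ>\<^sub>p [:h, a:])) \<le> 1"
    unfolding eq using degree_smult_le[of "-1/b" "r + [:c:]"] by simp
  then have "1/b = 1 \<and> a = 1 \<and> h = 0" using assms(1) unfolding hpP_def by blast
  then show ?thesis using assms(2) by (simp add: field_simps)
qed

lemma hp_shift: assumes "hpP p" "c \<noteq> 0"
  shows "2 \<le> degree (p \<circ>\<^sub>p [:- c, 1:] - smult 1 p - [:0:])"
proof (rule ccontr)
  assume "\<not> ?thesis"
  then have "degree (p \<circ>\<^sub>p [:- c, 1:] - p) \<le> 1" by simp
  moreover have "p - smult 1 (p \<circ>\<^sub>p [:- c, 1:]) = - (p \<circ>\<^sub>p [:- c, 1:] - p)" by simp
  ultimately have "degree (p - smult 1 (p \<circ>\<^sub>p [:- c, 1:])) \<le> 1" by (simp only: degree_minus)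
  then have "- c = 0" using assms(1) unfolding hpP_def by blast
  then show False using assms(2) by simp
qed

lemma LT: "hpP p \<Longrightarrow> P' w \<Longrightarrow> S (T p w)"
  by (rule L1) (auto simp: hp2)

lemma RR_inv: assumes hp: "hpP p" shows "r \<in> RR (ff p) \<Longrightarrow> \<exists>s. S s \<and> r = comp2 sg (T p (T p s))"
proof (induction rule: RR.induct)
  case (RR_base b)
  then obtain a q b' c where b: "a \<noteq> 0" "b' \<noteq> 0" "b = Jp a q b' c" unfolding Jonq_iff by blast
  have "S (T p (T p b))" using LT[OF hp] L3[OF b(1,2)] S_P' b(3) by blast
  moreover have "comp2 (ff p) b = comp2 sg (T p (T p (T p (T p b))))" by (rule f_apply)
  ultimately show ?case by blast
next
  case (RR_step b r)
  then obtain a q b' c where b: "a \<noteq> 0" "b' \<noteq> 0" "b = Jp a q b' c" unfolding Jonq_iff by blast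
  from RR_step obtain s where s: "S s" "r = comp2 sg (T p (T p s))" by blast
  have eq: "comp2 (ff p) (comp2 b r) = comp2 sg (T p (T p (T p (T p (js a q b' c (T p (T p s)))))))"
    unfolding f_apply s(2) b(3) Jp_sg ..
  have Ts: "S (T p s)" using LT[OF hp] S_P' s(1) by blast
  have TTs: "S (T p (T p s))" using LT[OF hp] S_P' Ts by blast
  have "S (T p (T p (js a q b' c (T p (T p s)))))"
  proof (cases "1 \<le> degree q")
    case True
    then have "P' (js a q b' c (T p (T p s)))" using L4 b(2) TTs by blast
    then show ?thesis using LT[OF hp] S_P' by blast
  next
    case False
    then have "degree q = 0" by simp
    then obtain h where q: "q = [:h:]" using degree0_coeffs by blast
    define r where "r = p \<circ>\<^sub>p [:h, a:] - smult b' p - [:c:]"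
    have rw: "T p (js a q b' c (T p (T p s))) = js b' r a h (T p s)"
      unfolding q r_def by (rule RW)
    show ?thesis
    proof (cases "1 \<le> degree r")
      case True
      then have "P' (js b' r a h (T p s))" using L4 b(1) Ts by blast
      then show ?thesis unfolding rw using LT[OF hp] by blast
    next
      case False
      then have "degree r = 0" by simp
      then have "a = 1 \<and> b' = 1 \<and> h = 0" using hp_r[OF hp b(2)] unfolding r_def by blast
      then have abh: "a = 1" "b' = 1" "h = 0" by auto
      have "c \<noteq> 0" using RR_step(2) b(3) q abh Jp_id by auto
      have r': "r = [:- c:]" unfolding r_def abh by simp
      have "T p (js b' r a h (T p s)) = js 1 (p \<circ>\<^sub>p [:- c, 1:] - smult 1 p - [:0:]) 1 (- c) s"
        unfolding r' abh by (rule RW)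
      moreover have "S (js 1 (p \<circ>\<^sub>p [:- c, 1:] - smult 1 p - [:0:]) 1 (- c) s)"
        by (rule L1[OF _ hp_shift[OF hp \<open>c \<noteq> 0\<close>] S_P'[OF s(1)]]) simp
      ultimately show ?thesis unfolding rw by simp
    qed
  qed
  then show ?case using eq by blast
qed

lemma sg_notin_W: assumes "hpP (p :: 'a::field poly)" shows "sg \<notin> W p"
proof
  assume "sg \<in> W p"
  then have "(sg :: 'a endo2) \<in> Jonq \<or> (\<exists>b r. sg = comp2 b r \<and> b \<in> Jonq \<and> r \<in> RR (ff p))"
    unfolding W_def by (simp only: Un_iff mem_Collect_eq)
  then show False
  proof (elim disjE exE conjE)
    assume "(sg :: 'a endo2) \<in> Jonq"
    then obtain a q b c where "(sg :: 'a endo2) = Jp a q b c" unfolding Jonq_iff by blast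
    then have "polX = [:[:c, b:]:]" unfolding sg_def Jp_def by simp
    then have "coeff (polX :: 'a bipoly) 1 = coeff [:[:c, b:]:] 1" by simp
    then show False by (simp add: polX_def)
  next
    fix b r assume 2: "sg = comp2 b r" "b \<in> Jonq" "r \<in> RR (ff p)"
    obtain a q b' c where b: "a \<noteq> 0" "b' \<noteq> 0" "b = Jp a q b' c" using 2 unfolding Jonq_iff by blast
    obtain s where s: "S s" "r = comp2 sg (T p (T p s))" using RR_inv[OF assms 2(3)] by blast
    define w where "w = T p (T p s)"
    have Sw: "S w" unfolding w_def using LT[OF assms] S_P' s(1) by blast
    have e: "(sg :: 'a endo2) = js a q b' c w" using 2(1) unfolding s(2) b(3) Jp_sg w_def .
    have "D (snd (sg :: 'a endo2)) = D (fst w)" unfolding e using D_js2[OF b(2)] Sw unfolding S_def by simp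
    moreover have "D (snd (sg :: 'a endo2)) = 1" unfolding sg_def using D_X by simp
    ultimately show False using Sw unfolding S_def by simp
  qed
qed

lemma main: assumes "hpP p" shows "gen_subgroup (Jonq \<union> {ff p}) \<subset> Aut2"
proof -
  have "gen_subgroup (Jonq \<union> {ff p}) \<subseteq> Aut2" using gen_Aut2 by blast
  moreover have "sg \<notin> gen_subgroup (Jonq \<union> {ff p})" using gen_W sg_notin_W[OF assms] by blast
  ultimately show ?thesis using sg_Aut2 by blast
qed


theorem proposition4p4:
  fixes p :: "'a::field poly"
  assumes hp: "\<forall>\<alpha> \<beta> \<gamma>. degree (p - smult \<alpha> (p \<circ>\<^sub>p [:\<gamma>, \<beta>:])) \<le> 1
                 \<longrightarrow> \<alpha> = 1 \<and> \<beta> = 1 \<and> \<gamma> = 0"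
  defines "\<sigma> \<equiv> (polY, polX)"
      and "t \<equiv> (- polX + [:p:], polY)"
  defines "f \<equiv> comp2 (comp2 (comp2 \<sigma> t) (comp2 \<sigma> t))
                 (comp2 \<sigma> (comp2 (comp2 t \<sigma>) (comp2 t \<sigma>)))"
  shows "gen_subgroup (Jonq \<union> {f}) \<subset> Aut2"
  proof -
  have hpP: "hpP p" using hp unfolding hpP_def .
  have e1: "\<sigma> = sg" unfolding \<sigma>_def sg_def ..
  have e2: "t = tt p" unfolding t_def tt_def Jp_def by (simp add: polX_def polY_def one_pCons)
  have e3: "f = ff p" unfolding f_def ff_def e1 e2 ..
  show ?thesis unfolding e3 by (rule main[OF hpP])
qed

end
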